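(* Let $1\le D\le K-1$ and let $\mathbf{L}$ be the $(K,D)$ AIR matrix. Let $i\in[0:\lceil l/2\rceil]$, let $k\in C_i$, and let $k_R=k-(K-D-\lambda_{2i-1})$. If $\lambda_{2i}>0$, write $k_R=c\lambda_{2i}+d$ with integers $c\ge0$ and $0\le d<\lambda_{2i}$; then the down-distance of $\mathbf{L}(k,k)$ is $$d_{down}(k)=D+\lambda_{2i+1}+(\beta_{2i}-1-c)\lambda_{2i}.$$ If $\lambda_{2i}=0$ (which happens exactly when $l$ is odd and $i=\lceil l/2\rceil$), then $d_{down}(k)=D$.
   Context: Notation: $[a:b]=\{a,\dots,b\}$. Let $K,D$ be integers with $1\le D\le K-1$. Define $\lambda_{-1}=K-D$, $\lambda_0=D$ and recursively, by Euclidean division, $\lambda_{i-1}=\beta_i\lambda_i+\lambda_{i+1}$ with $0\le\lambda_{i+1}<\lambda_i$, for $i=0,1,2,\dots$, stopping at the index $l\ge 0$ with $\lambda_{l+1}=0$; $\beta_0\ge0$ may be $0$, $\beta_i\ge1$ for $i\ge1$. Set $\lambda_j=0$ and $\beta_j=0$ for $j>l$. For $n\mid m$, $\mathbf{I}_{m\times n}$ is $m/n$ copies of the $n\times n$ identity stacked vertically and $\mathbf{I}_{n\times m}$ its transpose. The $(K,D)$ AIR matrix $\mathbf{L}$ is the $K\times(K-D)$ $0/1$ matrix (rows $[0:K-1]$, columns $[0:K-D-1]$) that is zero except in the blocks: the $(K-D)\times(K-D)$ identity in rows and columns $[0:K-D-1]$; for $0\le 2i\le l$, the even submatrix $\mathbf{I}_{\lambda_{2i}\times\beta_{2i}\lambda_{2i}}$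 in rows $[K-\lambda_{2i}:K-1]$, columns $[K-D-\lambda_{2i-1}:K-D-\lambda_{2i+1}-1]$ (absent if $i=0,\beta_0=0$); for $1\le 2i+1\le l$, the odd submatrix $\mathbf{I}_{\beta_{2i+1}\lambda_{2i+1}\times\lambda_{2i+1}}$ in rows $[K-\lambda_{2i}:K-\lambda_{2i+2}-1]$, columns $[K-D-\lambda_{2i+1}:K-D-1]$. Column intervals: $C_i=[K-D-\lambda_{2i-1}:K-D-\lambda_{2i+1}-1]$, $0\le i\le\lceil l/2\rceil$. Down-distance: for $k\in[0:K-D-1]$ (where $\mathbf{L}(k,k)=1$), let $k'$ be the largest row index with $k'>k$ and $\mathbf{L}(k',k)=1$; then $d_{down}(k)=k'-k$. *)

theory Defs
  imports Main
begin

text \<open>Euclidean sequence. lamS K D n stands for lambda_(n-1), i.e. the index is shifted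
  by one so that lambda_(-1) = K - D is lamS K D 0 and lambda_0 = D is lamS K D 1.
  Once a zero is reached, all later terms are 0 (the convention lambda_j = 0 for j > l).\<close>
fun lamS :: "nat \<Rightarrow> nat \<Rightarrow> nat \<Rightarrow> nat" where
  "lamS K D 0 = K - D"
| "lamS K D (Suc 0) = D"
| "lamS K D (Suc (Suc n)) =
     (if lamS K D (Suc n) = 0 then 0 else lamS K D n mod lamS K D (Suc n))"

definition lam :: "nat \<Rightarrow> nat \<Rightarrow> int \<Rightarrow> int" where
  "lam K D j = int (lamS K D (nat (j + 1)))"

definition beta :: "nat \<Rightarrow> nat \<Rightarrow> int \<Rightarrow> int" where
  "beta K D j = (if lam K D j = 0 then 0 else lam K D (j - 1) div lam K D j)"

definition lidx :: "nat \<Rightarrow> nat \<Rightarrow> nat" where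
  "lidx K D = (LEAST j::nat. lam K D (int j + 1) = 0)"

text \<open>The (K,D) AIR matrix, rows [0:K-1], columns [0:K-D-1], entries 0/1.
  Blocks: identity in rows/columns [0:K-D-1];
  even blocks I_(lambda_2i x beta_2i lambda_2i) (transpose of stacked identities: entry (a,b)=1 iff b mod lambda_2i = a);
  odd blocks I_(beta_(2i+1) lambda_(2i+1) x lambda_(2i+1)) (stacked identities: entry (a,b)=1 iff a mod lambda_(2i+1) = b).\<close>
definition AIR :: "nat \<Rightarrow> nat \<Rightarrow> nat \<Rightarrow> nat \<Rightarrow> nat" where
  "AIR K D r c =
    (let R = int r; C = int c; KK = int K; DD = int D; l = lidx K D in
     if R < KK \<and> C < KK - DD \<and>
        ( (R < KK - DD \<and> R = C)
        \<or> (\<exists>i::nat. 2 * i \<le> l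
              \<and> KK - lam K D (2 * int i) \<le> R \<and> R \<le> KK - 1
              \<and> KK - DD - lam K D (2 * int i - 1) \<le> C
              \<and> C \<le> KK - DD - lam K D (2 * int i + 1) - 1
              \<and> (C - (KK - DD - lam K D (2 * int i - 1))) mod lam K D (2 * int i)
                  = R - (KK - lam K D (2 * int i)))
        \<or> (\<exists>i::nat. 1 \<le> 2 * i + 1 \<and> 2 * i + 1 \<le> l
              \<and> KK - lam K D (2 * int i) \<le> R
              \<and> R \<le> KK - lam K D (2 * int i + 2) - 1
              \<and> KK - DD - lam K D (2 * int i + 1) \<le> C \<and> C \<le> KK - DD - 1
              \<and> (R - (KK - lam K D (2 * int i))) mod lam K D (2 * int i + 1)
                  = C - (KK - DD - lam K D (2 * int i + 1))))
     then 1 else 0)"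

definition Cint :: "nat \<Rightarrow> nat \<Rightarrow> nat \<Rightarrow> int set" where
  "Cint K D i = {int K - int D - lam K D (2 * int i - 1) .. int K - int D - lam K D (2 * int i + 1) - 1}"

definition ddown :: "nat \<Rightarrow> nat \<Rightarrow> nat \<Rightarrow> int" where
  "ddown K D k = int (GREATEST k'. k' > k \<and> k' < K \<and> AIR K D k' k = 1) - int k"

end

theory Submission
  imports Defs
begin

abbreviation FF :: "nat \<Rightarrow> nat \<Rightarrow> nat \<Rightarrow> int" where "FF K D n \<equiv> int (lamS K D n)"

lemma lamS_le2: "lamS K D (Suc (Suc n)) \<le> lamS K D n"
  by simp

lemma lamS_lt: "0 < lamS K D (Suc n) \<Longrightarrow> lamS K D (Suc (Suc n)) < lamS K D (Suc n)"
  by simp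

lemma lamS_step: "1 \<le> n \<Longrightarrow> lamS K D (Suc n) \<le> lamS K D n"
  by (cases n) auto

lemma lamS_anti: assumes "1 \<le> m" "m \<le> n" shows "lamS K D n \<le> lamS K D m"
  using assms(2)
proof (induction n rule: dec_induct)
  case base then show ?case by simp
next
  case (step n) then show ?case using lamS_step[of n K D] assms(1) by linarith
qed

lemma lamS_ex0: assumes "1 \<le> D" shows "\<exists>j. lamS K D (j+2) = 0"
proof (rule ccontr)
  assume "\<not> ?thesis"
  then have nz: "\<And>j. lamS K D (Suc (Suc j)) \<noteq> 0" by simp
  have "lamS K D (Suc n) + n \<le> D" for n
  proof (induction n)
    case 0 show ?case by simp
  next
    case (Suc n)
    have "0 < lamS K D (Suc n)" using nz assms by (cases n) auto
    then have "lamS K D (Suc (Suc n)) < lamS K D (Suc n)" by (rule lamS_lt)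
    with Suc.IH show ?case by linarith
  qed
  from this[of "D+1"] show False by simp
qed

lemma lam_e: "lam K D (2 * int i) = FF K D (2*i+1)"
  unfolding lam_def by (simp add: nat_add_distrib nat_mult_distrib)
lemma lam_em1: "lam K D (2 * int i - 1) = FF K D (2*i)"
  unfolding lam_def by (simp add: nat_add_distrib nat_mult_distrib)
lemma lam_o: "lam K D (2 * int i + 1) = FF K D (2*i+2)"
  unfolding lam_def by (simp add: nat_add_distrib nat_mult_distrib)
lemma lam_o2: "lam K D (2 * int i + 2) = FF K D (2*i+3)"
proof -
  have "nat (2 * int i + 2 + 1) = 2*i+3" by simp
  then show ?thesis unfolding lam_def by metis
qed
lemma lam_j1: "lam K D (int j + 1) = FF K D (j+2)"
  unfolding lam_def by (simp add: nat_add_distrib nat_mult_distrib)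

lemma beta_e: "beta K D (2 * int i) = (if lamS K D (2*i+1) = 0 then 0 else FF K D (2*i) div FF K D (2*i+1))"
  unfolding beta_def by (simp add: lam_e lam_em1)

lemma lidx_alt: "lidx K D = (LEAST j. lamS K D (j+2) = 0)"
  unfolding lidx_def lam_j1 by simp

lemma lidx_zero: "1 \<le> D \<Longrightarrow> lamS K D (lidx K D + 2) = 0"
  unfolding lidx_alt using lamS_ex0 by (rule LeastI_ex)

lemma lidx_pos: "j < lidx K D \<Longrightarrow> lamS K D (j+2) \<noteq> 0"
  unfolding lidx_alt by (rule not_less_Least)

lemma lamS_pos: assumes "1 \<le> D" "D \<le> K - 1" "n \<le> lidx K D + 1" shows "0 < lamS K D n"
proof -
  consider "n = 0" | "n = 1" | j where "n = j + 2" by (metis One_nat_def add_2_eq_Suc' not0_implies_Suc)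
  then show ?thesis
  proof cases
    case 3 then show ?thesis using lidx_pos[of j K D] assms by auto
  qed (use assms in auto)
qed

lemma lamS_zero: assumes "1 \<le> D" "lidx K D + 2 \<le> n" shows "lamS K D n = 0"
  using lamS_anti[of "lidx K D + 2" n K D] lidx_zero[OF assms(1)] assms(2) by simp

lemma AIR_iff: "AIR K D r c = 1 \<longleftrightarrow>
  (int r < int K \<and> int c < int K - int D \<and>
   ((int r < int K - int D \<and> r = c)
   \<or> (\<exists>i. 2*i \<le> lidx K D \<and> int K - FF K D (2*i+1) \<le> int r \<and> int r \<le> int K - 1
        \<and> int K - int D - FF K D (2*i) \<le> int c \<and> int c \<le> int K - int D - FF K D (2*i+2) - 1
        \<and> (int c - (int K - int D - FF K D (2*i))) mod FF K D (2*i+1) = int r - (int K - FF K D (2*i+1)))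
   \<or> (\<exists>i. 2*i+1 \<le> lidx K D \<and> int K - FF K D (2*i+1) \<le> int r \<and> int r \<le> int K - FF K D (2*i+3) - 1
        \<and> int K - int D - FF K D (2*i+2) \<le> int c \<and> int c \<le> int K - int D - 1
        \<and> (int r - (int K - FF K D (2*i+1))) mod FF K D (2*i+2) = int c - (int K - int D - FF K D (2*i+2)))))"
  unfolding AIR_def Let_def lam_e lam_em1 lam_o lam_o2 by auto

lemma helper_bound: fixes a z m x :: int
  assumes "0 < a" "0 \<le> z" "z < m*a" "z mod a = x" shows "z \<le> (m-1)*a + x"
proof -
  have z: "z = (z div a) * a + x" using assms(4) div_mult_mod_eq[of z a] by simp
  have "0 \<le> x" using assms(1,4) pos_mod_sign by blast
  then have "(z div a) * a \<le> z" using z by linarith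
  then have "(z div a) * a < m * a" using assms(3) by linarith
  then have "z div a < m" using assms(1) by (simp add: mult_less_cancel_right)
  then have "z div a \<le> m - 1" by simp
  then have "(z div a) * a \<le> (m-1)*a" using assms(1) by (simp add: mult_right_mono)
  then show ?thesis using z by linarith
qed

lemma helper_c: fixes b c d q :: int
  assumes "0 < b" "0 \<le> d" "c*b + d < q*b" shows "(c+1)*b \<le> q*b"
proof -
  have "c*b < q*b" using assms by linarith
  then have "c < q" using assms(1) by (simp add: mult_less_cancel_right)
  then show ?thesis using assms(1) by (simp add: mult_right_mono)
qed

lemma FF_anti: "1 \<le> m \<Longrightarrow> m \<le> n \<Longrightarrow> FF K D n \<le> FF K D m"
  using lamS_anti by simp

theorem lemma1:
  fixes K D i k :: nat
  assumes "1 \<le> D" and "D \<le> K - 1"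
    and "i \<le> (lidx K D + 1) div 2"
    and "int k \<in> Cint K D i"
  shows "(lam K D (2 * int i) > 0 \<longrightarrow>
            (\<forall>c d :: int. 0 \<le> c \<and> 0 \<le> d \<and> d < lam K D (2 * int i)
               \<and> int k - (int K - int D - lam K D (2 * int i - 1)) = c * lam K D (2 * int i) + d
               \<longrightarrow> ddown K D k = int D + lam K D (2 * int i + 1)
                      + (beta K D (2 * int i) - 1 - c) * lam K D (2 * int i)))
       \<and> (lam K D (2 * int i) = 0 \<longleftrightarrow> (odd (lidx K D) \<and> i = (lidx K D + 1) div 2))
       \<and> (lam K D (2 * int i) = 0 \<longrightarrow> ddown K D k = int D)"
proof -
  have Kge: "2 \<le> K" using assms(1,2) by linarith
  have kC1: "int K - int D - FF K D (2*i) \<le> int k" and kC2: "int k \<le> int K - int D - FF K D (2*i+2) - 1"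
    using assms(4) unfolding Cint_def lam_em1 lam_o by auto
  have i2: "2*i \<le> lidx K D + 1" using assms(3) by linarith
  have apos: "0 < lamS K D (2*i)" using lamS_pos[OF assms(1,2)] i2 by simp
  have bD: "lamS K D (2*i+1) \<le> D" using lamS_anti[of 1 "2*i+1" K D] by simp
  have conj2: "lamS K D (2*i+1) = 0 \<longleftrightarrow> odd (lidx K D) \<and> i = (lidx K D + 1) div 2"
  proof
    assume z: "lamS K D (2*i+1) = 0"
    then have "\<not> 2*i+1 \<le> lidx K D + 1" using lamS_pos[OF assms(1,2), of "2*i+1"] by auto
    with i2 have "2*i = lidx K D + 1" by simp
    then show "odd (lidx K D) \<and> i = (lidx K D + 1) div 2" by presburger
  next
    assume "odd (lidx K D) \<and> i = (lidx K D + 1) div 2"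
    then have "2*i = lidx K D + 1" by presburger
    then show "lamS K D (2*i+1) = 0" using lamS_zero[OF assms(1), where n="2*i+1"] by simp
  qed
  define P where "P = (\<lambda>y. k < y \<and> y < K \<and> AIR K D y k = 1)"
  have dd: "ddown K D k = int (Greatest P) - int k" by (simp add: ddown_def P_def)
  have part1: "ddown K D k = int D + FF K D (2*i+2) + (beta K D (2 * int i) - 1 - c) * FF K D (2*i+1)"
    if bpos0: "0 < lamS K D (2*i+1)" and c0: "0 \<le> c" and d0: "0 \<le> d" and db: "d < FF K D (2*i+1)"
      and kcd: "int k - (int K - int D - FF K D (2*i)) = c * FF K D (2*i+1) + d" for c d :: int
  proof -
    define a where "a = FF K D (2*i)"
    define b where "b = FF K D (2*i+1)"
    define e where "e = FF K D (2*i+2)"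
    have bpos: "0 < b" using bpos0 b_def by simp
    have l2: "2*i \<le> lidx K D"
    proof (rule ccontr)
      assume "\<not> 2*i \<le> lidx K D"
      then have "lamS K D (2*i+1) = 0" using lamS_zero[OF assms(1), where n="2*i+1"] by simp
      with bpos0 show False by simp
    qed
    have "lamS K D (Suc (Suc (2*i))) = lamS K D (2*i) mod lamS K D (Suc (2*i))" using bpos0 by simp
    then have emod: "e = a mod b" unfolding e_def a_def b_def by (simp add: of_nat_mod)
    have adiv: "(a div b) * b + e = a" using emod div_mult_mod_eq[of a b] by simp
    have "c*b + d < (a div b)*b" using kcd kC2 adiv unfolding a_def b_def e_def by linarith
    then have cb: "(c+1)*b \<le> (a div b)*b" using helper_c bpos d0 by blast
    have cb2: "(c+1)*b = c*b + b" by (simp add: algebra_simps)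
    have bK: "b \<le> int K" using bD Kge b_def assms(2) by simp
    define t where "t = nat (int K - b + d)"
    have t: "int t = int K - b + d" unfolding t_def using bK d0 by simp
    have kk: "int k = int K - int D - a + c*b + d" using kcd unfolding a_def b_def by linarith
have m: "(int k - (int K - int D - a)) mod b = d" using kk d0 db b_def by simp
    have Pt: "P t"
      unfolding P_def
    proof (intro conjI)
      show "k < t" using t kk cb cb2 adiv assms(1) unfolding e_def by simp
      show "t < K" using t db b_def by simp
      show "AIR K D t k = 1" unfolding AIR_iff
        using l2 t m kC1 kC2 db d0 bK unfolding a_def b_def by (intro conjI disjI2 disjI1 exI[of _ i]) auto
    qed
    have up: "y \<le> t" if Py: "P y" for y
    proof -
      from Py have hk: "k < y" "y < K" and ha: "AIR K D y k = 1" by (auto simp: P_def)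
      from ha[unfolded AIR_iff] consider "y = k"
        | j where "2*j \<le> lidx K D" "int K - FF K D (2*j+1) \<le> int y" "int y \<le> int K - 1"
          "int K - int D - FF K D (2*j) \<le> int k" "int k \<le> int K - int D - FF K D (2*j+2) - 1"
          "(int k - (int K - int D - FF K D (2*j))) mod FF K D (2*j+1) = int y - (int K - FF K D (2*j+1))"
        | j where "2*j+1 \<le> lidx K D" "int K - FF K D (2*j+1) \<le> int y" "int y \<le> int K - FF K D (2*j+3) - 1"
          "int K - int D - FF K D (2*j+2) \<le> int k" "int k \<le> int K - int D - 1"
          "(int y - (int K - FF K D (2*j+1))) mod FF K D (2*j+2) = int k - (int K - int D - FF K D (2*j+2))"
        by blast
      then show ?thesis
      proof cases
        case 1 then show ?thesis using hk by simp
      next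
        case (2 j)
        have "j = i"
        proof (rule ccontr)
          assume "j \<noteq> i"
          then consider "j < i" | "i < j" by linarith
          then show False
          proof cases
            case 1
            then have "FF K D (2*i) \<le> FF K D (2*j+2)" by (intro FF_anti) auto
            then show False using 2 kC1 by linarith
          next
            case 2
            then have "FF K D (2*j) \<le> FF K D (2*i+2)" by (intro FF_anti) auto
            then show False using \<open>int K - int D - FF K D (2*j) \<le> int k\<close> kC2 by linarith
          qed
        qed
        then have "int y = int K - b + d" using 2 m unfolding a_def b_def by simp
        then show ?thesis using t by simp
      next
        case (3 j)
        have "j < i"
        proof (rule ccontr)
          assume "\<not> j < i"
          then have "FF K D (2*j+2) \<le> FF K D (2*i+2)" by (intro FF_anti) auto
          then show False using 3 kC2 by linarith
        qed
        then have "FF K D (2*i+1) \<le> FF K D (2*j+3)" by (intro FF_anti) auto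
        then show ?thesis using 3 t d0 b_def by linarith
      qed
    qed
    have "Greatest P = t" using Pt up by (rule Greatest_equality)
    then have "ddown K D k = int t - int k" using dd by simp
    also have "\<dots> = int D + a - b - c*b" using t kk by simp
    also have "\<dots> = int D + e + (a div b - 1 - c) * b" using adiv by (simp add: algebra_simps)
    finally show ?thesis using beta_e[of K D i] bpos0 unfolding a_def b_def e_def by simp
  qed
  have part3: "ddown K D k = int D" if b0: "lamS K D (2*i+1) = 0"
  proof -
    have li: "2*i = lidx K D + 1" using conj2 b0 by presburger
    then obtain i0 where i0: "i = Suc i0" by (cases i) auto
    have l0: "2*i0+1 = lidx K D" using li i0 by simp
    have b3: "lamS K D (2*i0+3) = 0" using b0 i0 by (simp add: numeral_3_eq_3)
    define g where "g = FF K D (2*i0+1)"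
    define a where "a = FF K D (2*i)"
    have apos': "0 < a" using apos a_def by simp
    have gpos: "0 < lamS K D (2*i0+2)" using apos i0 by simp
    have "lamS K D (Suc (Suc (2*i0+1))) = 0" using b0 i0 by simp
    then have "lamS K D (2*i0+1) mod lamS K D (2*i0+2) = 0" using gpos by (simp split: if_splits)
    then have gmod: "g mod a = 0" unfolding g_def a_def using i0 by (simp add: of_nat_mod[symmetric])
    define m where "m = g div a"
    have gm: "g = m*a" using gmod div_mult_mod_eq[of g a] m_def by simp
    have e0: "FF K D (2*i+2) = 0" using lamS_zero[OF assms(1), where n="2*i+2"] li by simp
    have ga: "a \<le> g" unfolding a_def g_def i0 by (intro FF_anti) auto
    have k1: "int K - int D - a \<le> int k" and k2: "int k \<le> int K - int D - 1"
      using kC1 kC2 e0 a_def by auto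
    define t where "t = k + D"
    define x where "x = int k - (int K - int D - a)"
    have x0: "0 \<le> x" and xa: "x < a" using k1 k2 x_def assms(1) by auto
    have ma: "(m-1)*a = m*a - a" by (simp add: algebra_simps)
    have Pt: "P t"
      unfolding P_def
    proof (intro conjI)
      show "k < t" using t_def assms(1) by simp
      show "t < K" using k2 t_def by simp
      have "int t - (int K - g) = x + (m-1)*a" using t_def x_def gm ma by simp
      then have mm: "(int t - (int K - g)) mod a = x" using x0 xa by simp
      show "AIR K D t k = 1" unfolding AIR_iff
        using l0 mm k1 k2 ga b3 i0 x_def unfolding a_def g_def t_def
        by (intro conjI disjI2 exI[of _ i0]) auto
    qed
    have up: "y \<le> t" if Py: "P y" for y
    proof -
      from Py have hk: "k < y" "y < K" and ha: "AIR K D y k = 1" by (auto simp: P_def)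
      from ha[unfolded AIR_iff] consider "y = k"
        | j where "2*j \<le> lidx K D" "int K - FF K D (2*j+1) \<le> int y" "int y \<le> int K - 1"
          "int K - int D - FF K D (2*j) \<le> int k" "int k \<le> int K - int D - FF K D (2*j+2) - 1"
          "(int k - (int K - int D - FF K D (2*j))) mod FF K D (2*j+1) = int y - (int K - FF K D (2*j+1))"
        | j where "2*j+1 \<le> lidx K D" "int K - FF K D (2*j+1) \<le> int y" "int y \<le> int K - FF K D (2*j+3) - 1"
          "int K - int D - FF K D (2*j+2) \<le> int k" "int k \<le> int K - int D - 1"
          "(int y - (int K - FF K D (2*j+1))) mod FF K D (2*j+2) = int k - (int K - int D - FF K D (2*j+2))"
        by blast
      then show ?thesis
      proof cases
        case 1 then show ?thesis using hk by simp
      next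
        case (2 j)
        have "2*j+2 \<le> 2*i" using 2(1) li by presburger
        then have "FF K D (2*i) \<le> FF K D (2*j+2)" by (intro FF_anti) auto
        then show ?thesis using 2 k1 a_def by linarith
      next
        case (3 j)
        then have "j \<le> i0" using l0 by simp
        then consider "j < i0" | "j = i0" by linarith
        then show ?thesis
        proof cases
          case 1
          then have "FF K D (2*i0+1) \<le> FF K D (2*j+3)" by (intro FF_anti) auto
          then show ?thesis using 3 k1 ga g_def t_def by linarith
        next
          case 2
          define z where "z = int y - (int K - g)"
          have z0: "0 \<le> z" using 3 2 z_def g_def by simp
          have zm: "z < m*a" using 3 2 z_def gm b3 i0 g_def by simp
          have zx: "z mod a = x" using 3 2 z_def g_def a_def x_def i0 by simp
          have "z \<le> (m-1)*a + x" using helper_bound[OF apos' z0 zm zx] .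
          then show ?thesis using z_def gm ma x_def t_def by linarith
        qed
      qed
    qed
    have "Greatest P = t" using Pt up by (rule Greatest_equality)
    then show ?thesis using dd t_def by simp
  qed
  show ?thesis
    unfolding lam_e lam_em1 lam_o
    using part1 part3 conj2 by auto
qed

end
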